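(* Let $\nu$ be a probability measure on $\mathrm{U}(d)$ which is an exact unitary $t$-design. Let $\Phi\in\mathcal{H}_t$ satisfy $\int_{\mathcal{U}(d)}\mathrm{d}\mu(\mathcal{U})\,\Phi(\mathcal{U})=1$. Then for every $V\in\mathrm{U}(d)$ and every $\epsilon\in[0,2]$, $$\int_{B(\mathcal{V},\epsilon)}\mathrm{d}\mu(\mathcal{U})\,(T_\nu\Phi)(\mathcal{U})=\mathrm{vol}(B(\mathcal{V},\epsilon)).$$
   Context: $\mathcal{U}(d)$ is the set of unitary channels on $\mathbb{C}^d$ (functions on it = phase-invariant functions on $\mathrm{U}(d)$); $\mu$ is the Haar probability measure and $\mathrm{vol}=\mu$. $\mathrm{D}(\mathcal{U},\mathcal{V})=\min_\varphi\|U-e^{i\varphi}V\|_\infty$ and $B(\mathcal{V},\epsilon)=\{\mathcal{U}:\mathrm{D}(\mathcal{U},\mathcal{V})\le\epsilon\}$. $\mathcal{H}_t$ is the span of functions $U\mapsto\mathrm{tr}(A\,U^{\otimes s}\otimes\bar U^{\otimes s})$, $0\le s\le t$. $(T_\nu\Phi)(U)=\int\mathrm{d}\nu(V)\,\Phi(V^{-1}U)$. $\nu$ is an exact $t$-design if $\int\mathrm{d}\nu\,G=\int\mathrm{d}\mu\,G$ for all $G(U)=\mathrm{tr}(A\,U^{\otimes t}\otimes\bar U^{\otimes t})$. *)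

theory Defs
  imports "HOL-Probability.Probability" "HOL-Library.Function_Algebras"
begin

text \<open>Matrices in M_d(C) are represented as complex^'d^'d, with the dimension d = CARD('d).\<close>

definition adjoint_mat :: "complex^'d^'d \<Rightarrow> complex^'d^'d" where
  "adjoint_mat U = (\<chi> i j. cnj (U $ j $ i))"

definition unitary_group :: "(complex^'d::finite^'d) set" where
  "unitary_group = {U. adjoint_mat U ** U = mat 1}"

definition op_norm :: "complex^'d::finite^'d \<Rightarrow> real" where
  "op_norm M = onorm (\<lambda>x. M *v x)"

text \<open>Distance between unitary channels: min over global phases.\<close>
definition chan_dist :: "complex^'d::finite^'d \<Rightarrow> complex^'d^'d \<Rightarrow> real" where
  "chan_dist U V = (INF \<phi>::real. op_norm (U - (\<chi> i j. cis \<phi> * V $ i $ j)))"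

definition chan_ball :: "complex^'d::finite^'d \<Rightarrow> real \<Rightarrow> (complex^'d^'d) set" where
  "chan_ball V \<epsilon> = {U \<in> unitary_group. chan_dist U V \<le> \<epsilon>}"

definition haar_measure :: "(complex^'d::finite^'d) measure \<Rightarrow> bool" where
  "haar_measure \<mu> \<longleftrightarrow> prob_space \<mu> \<and> sets \<mu> = sets borel \<and> emeasure \<mu> unitary_group = 1 \<and>
     (\<forall>V\<in>unitary_group. distr \<mu> borel (\<lambda>U. V ** U) = \<mu>)"

definition prob_on_unitary :: "(complex^'d::finite^'d) measure \<Rightarrow> bool" where
  "prob_on_unitary \<nu> \<longleftrightarrow> prob_space \<nu> \<and> sets \<nu> = sets borel \<and> emeasure \<nu> unitary_group = 1"

text \<open>Multi-indices of length s (indexing the tensor power (C^d)^{\<otimes>s}).\<close>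
definition multi_idx :: "nat \<Rightarrow> (nat \<Rightarrow> 'd) set" where
  "multi_idx s = {0..<s} \<rightarrow>\<^sub>E UNIV"

text \<open>Entry (I,J) of U^{\<otimes>s}.\<close>
definition tens_entry :: "nat \<Rightarrow> complex^'d^'d \<Rightarrow> (nat \<Rightarrow> 'd) \<Rightarrow> (nat \<Rightarrow> 'd) \<Rightarrow> complex" where
  "tens_entry s U I J = (\<Prod>m<s. U $ I m $ J m)"

text \<open>tr(A (U^{\<otimes>s} \<otimes> conj(U)^{\<otimes>s})), where A is a matrix indexed by pairs of multi-indices;
  the entry ((I,K),(J,L)) of U^{\<otimes>s} \<otimes> conj(U)^{\<otimes>s} is (U^{\<otimes>s})_{IJ} * conj((U^{\<otimes>s})_{KL}).\<close>
definition tr_tensor ::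
  "nat \<Rightarrow> ((nat \<Rightarrow> 'd::finite) \<times> (nat \<Rightarrow> 'd) \<Rightarrow> (nat \<Rightarrow> 'd) \<times> (nat \<Rightarrow> 'd) \<Rightarrow> complex)
     \<Rightarrow> complex^'d^'d \<Rightarrow> complex" where
  "tr_tensor s A U = (\<Sum>I\<in>multi_idx s. \<Sum>K\<in>multi_idx s. \<Sum>J\<in>multi_idx s. \<Sum>L\<in>multi_idx s.
      A (J, L) (I, K) * (tens_entry s U I J * cnj (tens_entry s U K L)))"

definition H_space :: "nat \<Rightarrow> (complex^'d::finite^'d \<Rightarrow> complex) set" where
  "H_space t = module.span (\<lambda>c f. (\<lambda>U. c * f U))
      {G. \<exists>s A. s \<le> t \<and> G = tr_tensor s A}"

definition exact_design :: "nat \<Rightarrow> (complex^'d::finite^'d) measure \<Rightarrow> (complex^'d^'d) measure \<Rightarrow> bool" where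
  "exact_design t \<mu> \<nu> \<longleftrightarrow>
     (\<forall>A. integral\<^sup>L \<nu> (tr_tensor t A) = integral\<^sup>L \<mu> (tr_tensor t A))"

definition T_op :: "(complex^'d::finite^'d) measure \<Rightarrow> (complex^'d^'d \<Rightarrow> complex) \<Rightarrow> complex^'d^'d \<Rightarrow> complex" where
  "T_op \<nu> \<Phi> U = (\<integral>V. \<Phi> (matrix_inv V ** U) \<partial>\<nu>)"

end

theory Submission
  imports Defs
begin


abbreviation UG where "UG \<equiv> unitary_group"

lemma adj_nth[simp]: "adjoint_mat U $ i $ j = cnj (U $ j $ i)"
  by (simp add: adjoint_mat_def)

lemma adj_adj[simp]: "adjoint_mat (adjoint_mat U) = U"
  by (simp add: vec_eq_iff)

lemma adj_mult: "adjoint_mat (A ** B) = adjoint_mat B ** adjoint_mat (A::complex^'d::finite^'d)"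
  by (simp add: vec_eq_iff matrix_matrix_mult_def mult.commute)

lemma adj_mat1[simp]: "adjoint_mat (mat 1 :: complex^'d::finite^'d) = mat 1"
  by (simp add: vec_eq_iff mat_def)

lemma UG_iff: "U \<in> UG \<longleftrightarrow> adjoint_mat U ** U = mat 1"
  by (simp add: unitary_group_def)

lemma UG_right: "U \<in> UG \<Longrightarrow> U ** adjoint_mat U = mat 1"
  by (simp add: UG_iff matrix_left_right_inverse)

lemma UG_adj: "U \<in> UG \<Longrightarrow> adjoint_mat U \<in> UG"
  using UG_right by (simp add: UG_iff)

lemma UG_mult: "U \<in> UG \<Longrightarrow> V \<in> UG \<Longrightarrow> U ** V \<in> UG"
proof -
  assume a: "U \<in> UG" "V \<in> UG"
  have "adjoint_mat (U ** V) ** (U ** V) = adjoint_mat V ** ((adjoint_mat U ** U) ** V)"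
    by (simp add: adj_mult matrix_mul_assoc)
  also have "\<dots> = mat 1" using a by (simp add: UG_iff)
  finally show ?thesis by (simp add: UG_iff)
qed

lemma UG_col: assumes "U \<in> UG" shows "(\<Sum>k\<in>UNIV. cnj (U $ k $ j) * U $ k $ j) = 1"
proof -
  have "(adjoint_mat U ** U) $ j $ j = 1" using assms by (simp add: UG_iff mat_def)
  thus ?thesis by (simp add: matrix_matrix_mult_def)
qed

lemma UG_entry: assumes "U \<in> UG" shows "norm (U $ i $ j) \<le> 1"
proof -
  have "(\<Sum>k\<in>UNIV. (norm (U $ k $ j))^2) = 1"
  proof -
    have "complex_of_real (\<Sum>k\<in>UNIV. (norm (U $ k $ j))^2) = (\<Sum>k\<in>UNIV. cnj (U $ k $ j) * U $ k $ j)"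
      by (simp only: of_real_sum complex_norm_square[symmetric] mult.commute)
    thus ?thesis using UG_col[OF assms] by (metis of_real_eq_1_iff)
  qed
  moreover have "(norm (U $ i $ j))^2 \<le> (\<Sum>k\<in>UNIV. (norm (U $ k $ j))^2)"
    by (rule member_le_sum) auto
  ultimately have "(norm (U $ i $ j))^2 \<le> 1" by simp
  thus ?thesis by (simp add: power_le_one_iff abs_le_square_iff) 
qed

lemma UG_closed: "closed UG"
proof -
  have "UG = (\<Inter>i. \<Inter>j. {U. (\<Sum>k\<in>UNIV. cnj (U $ k $ i) * U $ k $ j) = mat 1 $ i $ j})"
    by (auto simp: UG_iff vec_eq_iff matrix_matrix_mult_def)
  also have "closed \<dots>"
    by (intro closed_INT ballI closed_Collect_eq continuous_intros) 
  finally show ?thesis .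
qed

lemma UG_bounded: "bounded UG"
proof -
  have "norm U \<le> real (CARD('d) * CARD('d))" if "U \<in> (UG :: (complex^'d::finite^'d) set)" for U
  proof -
    have "norm U \<le> (\<Sum>i\<in>UNIV. norm (U $ i))"
      unfolding norm_vec_def by (rule L2_set_le_sum) auto
    also have "\<dots> \<le> (\<Sum>i\<in>(UNIV::'d set). (\<Sum>j\<in>(UNIV::'d set). norm (U $ i $ j)))"
      by (intro sum_mono) (simp add: norm_vec_def L2_set_le_sum)
    also have "\<dots> \<le> (\<Sum>i\<in>(UNIV::'d set). (\<Sum>j\<in>(UNIV::'d set). 1))"
      by (intro sum_mono UG_entry that)
    finally show ?thesis by simp
  qed
  thus ?thesis by (auto simp: bounded_iff)
qed

lemma UG_compact: "compact UG"
  using UG_closed UG_bounded by (simp add: compact_eq_bounded_closed)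

lemma UG_borel[measurable]: "UG \<in> sets borel"
  by (rule borel_closed[OF UG_closed])

lemma matrix_inv_UG: assumes "V \<in> UG" shows "matrix_inv V = adjoint_mat V"
proof -
  have "V ** adjoint_mat V = mat 1 \<and> adjoint_mat V ** V = mat 1"
    using assms UG_right by (simp add: UG_iff)
  hence ex: "\<exists>A'. V ** A' = mat 1 \<and> A' ** V = mat 1" by blast
  have "V ** matrix_inv V = mat 1 \<and> matrix_inv V ** V = mat 1"
    unfolding matrix_inv_def by (rule someI_ex[OF ex])
  hence "adjoint_mat V ** (V ** matrix_inv V) = adjoint_mat V" by simp
  thus ?thesis using assms by (simp add: matrix_mul_assoc UG_iff)
qed


section \<open>Polynomial classes\<close>

lemma multi_idx_alt: "multi_idx s = {..<s} \<rightarrow>\<^sub>E (UNIV :: 'd set)"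
  by (simp add: multi_idx_def atLeast0LessThan)

lemma finite_multi_idx[simp]: "finite (multi_idx s :: (nat \<Rightarrow> 'd::finite) set)"
  by (simp add: multi_idx_def finite_PiE)

lemma multi_idx_upd: "I \<in> multi_idx s \<Longrightarrow> I(s := a) \<in> multi_idx (Suc s)"
  by (auto simp: multi_idx_alt PiE_iff extensional_def)

lemma tens_entry_Suc:
  "tens_entry (Suc s) V (I(s := a)) (J(s := b)) = tens_entry s V I J * V $ a $ b"
proof -
  have "(\<Prod>m<s. V $ (I(s := a)) m $ (J(s := b)) m) = (\<Prod>m<s. V $ I m $ J m)"
    by (intro prod.cong) auto
  thus ?thesis by (simp add: tens_entry_def)
qed

definition polys :: "nat \<Rightarrow> (complex^'d::finite^'d \<Rightarrow> complex) set" where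
  "polys s = {f. \<exists>A. \<forall>V\<in>UG. f V = tr_tensor s A V}"

lemma polys_cong: "(\<And>V. V \<in> UG \<Longrightarrow> f V = g V) \<Longrightarrow> g \<in> polys s \<Longrightarrow> f \<in> polys s"
  by (auto simp: polys_def)

lemma polys_zero: "(\<lambda>_. 0) \<in> polys s"
  by (auto simp: polys_def tr_tensor_def intro!: exI[of _ "\<lambda>_ _. 0"])

lemma polys_add: "f \<in> polys s \<Longrightarrow> g \<in> polys s \<Longrightarrow> (\<lambda>V. f V + g V) \<in> polys s"
proof -
  assume "f \<in> polys s" "g \<in> polys s"
  then obtain A B where A: "\<forall>V\<in>UG. f V = tr_tensor s A V" and B: "\<forall>V\<in>UG. g V = tr_tensor s B V"
    by (auto simp: polys_def)
  show ?thesis unfolding polys_def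
    by (rule CollectI, rule exI[of _ "\<lambda>x y. A x y + B x y"])
      (simp add: A B tr_tensor_def distrib_right sum.distrib)
qed

lemma polys_scale: "f \<in> polys s \<Longrightarrow> (\<lambda>V. c * f V) \<in> polys s"
proof -
  assume "f \<in> polys s"
  then obtain A where A: "\<forall>V\<in>UG. f V = tr_tensor s A V"
    by (auto simp: polys_def)
  show ?thesis unfolding polys_def
    by (rule CollectI, rule exI[of _ "\<lambda>x y. c * A x y"])
      (simp add: A tr_tensor_def sum_distrib_left mult.assoc)
qed

lemma polys_sum: "finite S \<Longrightarrow> (\<And>x. x \<in> S \<Longrightarrow> f x \<in> polys s) \<Longrightarrow> (\<lambda>V. \<Sum>x\<in>S. f x V) \<in> polys s"
proof (induction S rule: finite_induct)
  case empty
  then show ?case by (simp add: polys_zero)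
next
  case (insert x F)
  then show ?case by (simp add: polys_add)
qed

lemma sum_if_const: "(\<Sum>x\<in>S. if P then f x else 0) = (if P then sum f S else 0)"
  by simp

lemma polys_mono:
  fixes I0 J0 K0 L0 :: "nat \<Rightarrow> 'd::finite"
  assumes "I0 \<in> multi_idx s" "J0 \<in> multi_idx s" "K0 \<in> multi_idx s" "L0 \<in> multi_idx s"
  shows "(\<lambda>V. tens_entry s V I0 J0 * cnj (tens_entry s V K0 L0)) \<in> polys s"
  unfolding polys_def
proof (rule CollectI, rule exI[of _ "\<lambda>(J,L) (I,K). if I = I0 then if K = K0 then if J = J0 then if L = L0 then 1 else 0 else 0 else 0 else 0"], intro ballI)
  fix V :: "complex^'d^'d"
  show "tens_entry s V I0 J0 * cnj (tens_entry s V K0 L0) =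
         tr_tensor s (\<lambda>(J,L) (I,K). if I = I0 then if K = K0 then if J = J0 then if L = L0 then 1 else 0 else 0 else 0 else 0) V"
    unfolding tr_tensor_def using assms by (simp add: if_distrib[of "\<lambda>x. x * _"] sum_if_const sum.delta' cong: if_cong)
qed


lemma polys_mul:
  assumes "f \<in> polys s"
  shows "(\<lambda>V. f V * (V $ a $ b * cnj (V $ c $ e))) \<in> polys (Suc s)"
proof -
  obtain A where A: "\<forall>V\<in>UG. f V = tr_tensor s A V"
    using assms by (auto simp: polys_def)
  show ?thesis
  proof (rule polys_cong)
    fix V :: "complex^'a^'a" assume "V \<in> UG"
    show "f V * (V $ a $ b * cnj (V $ c $ e)) =
      (\<Sum>I\<in>multi_idx s. \<Sum>K\<in>multi_idx s. \<Sum>J\<in>multi_idx s. \<Sum>L\<in>multi_idx s.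
         A (J, L) (I, K) * (tens_entry (Suc s) V (I(s:=a)) (J(s:=b)) * cnj (tens_entry (Suc s) V (K(s:=c)) (L(s:=e)))))"
      using A \<open>V \<in> UG\<close> apply (simp add: tr_tensor_def sum_distrib_right tens_entry_Suc)
      by (intro sum.cong refl) (simp add: mult_ac)
  next
    show "(\<lambda>V. \<Sum>I\<in>multi_idx s. \<Sum>K\<in>multi_idx s. \<Sum>J\<in>multi_idx s. \<Sum>L\<in>multi_idx s.
         A (J, L) (I, K) * (tens_entry (Suc s) V (I(s:=a)) (J(s:=b)) * cnj (tens_entry (Suc s) V (K(s:=c)) (L(s:=e)))))
       \<in> polys (Suc s)"
      by (intro polys_sum polys_scale polys_mono multi_idx_upd finite_multi_idx)
  qed
qed

lemma polys_Suc:
  assumes "f \<in> polys s" shows "f \<in> polys (Suc s)"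
proof (rule polys_cong)
  fix V :: "complex^'a^'a" assume "V \<in> UG"
  show "f V = (\<Sum>k\<in>UNIV. f V * (V $ k $ undefined * cnj (V $ k $ undefined)))"
    using UG_col[OF \<open>V \<in> UG\<close>, of undefined] by (simp add: sum_distrib_left[symmetric] mult_ac)
next
  show "(\<lambda>V. \<Sum>k\<in>UNIV. f V * (V $ k $ undefined * cnj (V $ k $ undefined))) \<in> polys (Suc s)"
    by (intro polys_sum polys_mul assms finite)
qed

lemma polys_le:
  assumes "s \<le> t" "f \<in> polys s" shows "f \<in> polys t"
  using assms
proof (induction t rule: dec_induct)
  case base then show ?case by simp
next
  case (step n) then show ?case by (simp add: polys_Suc)
qed

lemma tens_entry_adj_mult:
  "tens_entry s (adjoint_mat V ** U) I J =
     (\<Sum>P\<in>multi_idx s. cnj (tens_entry s V P I) * tens_entry s U P J)"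
proof -
  have "tens_entry s (adjoint_mat V ** U) I J = (\<Prod>m<s. \<Sum>k\<in>UNIV. cnj (V $ k $ I m) * U $ k $ J m)"
    by (simp add: tens_entry_def matrix_matrix_mult_def)
  also have "\<dots> = (\<Sum>P\<in>multi_idx s. \<Prod>m<s. cnj (V $ P m $ I m) * U $ P m $ J m)"
    unfolding multi_idx_alt by (rule prod_sum_PiE) auto
  also have "\<dots> = (\<Sum>P\<in>multi_idx s. cnj (tens_entry s V P I) * tens_entry s U P J)"
    by (simp add: tens_entry_def prod.distrib cnj_prod)
  finally show ?thesis .
qed

lemma polys_subst: "(\<lambda>V. tr_tensor s A (adjoint_mat V ** U)) \<in> polys s"
proof (rule polys_cong)
  fix V :: "complex^'a^'a"
  show "tr_tensor s A (adjoint_mat V ** U) =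
    (\<Sum>I\<in>multi_idx s. \<Sum>K\<in>multi_idx s. \<Sum>J\<in>multi_idx s. \<Sum>L\<in>multi_idx s.
       \<Sum>Q\<in>multi_idx s. \<Sum>P\<in>multi_idx s.
       (A (J, L) (I, K) * tens_entry s U P J * cnj (tens_entry s U Q L)) *
       (tens_entry s V Q K * cnj (tens_entry s V P I)))"
    by (simp add: tr_tensor_def tens_entry_adj_mult sum_distrib_left sum_distrib_right mult_ac)
next
  show "(\<lambda>V. \<Sum>I\<in>multi_idx s. \<Sum>K\<in>multi_idx s. \<Sum>J\<in>multi_idx s. \<Sum>L\<in>multi_idx s.
       \<Sum>Q\<in>multi_idx s. \<Sum>P\<in>multi_idx s.
       (A (J, L) (I, K) * tens_entry s U P J * cnj (tens_entry s U Q L)) *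
       (tens_entry s V Q K * cnj (tens_entry s V P I))) \<in> polys s"
    by (intro polys_sum polys_scale polys_mono finite_multi_idx)
qed


section \<open>Continuity and integrability\<close>

lemma cont_tr_tensor: "continuous_on UNIV (tr_tensor s A)"
  unfolding tr_tensor_def tens_entry_def by (intro continuous_intros)

lemma cont_adjmul_pair: "continuous_on UNIV (\<lambda>p::(complex^'d::finite^'d) \<times> (complex^'d^'d). adjoint_mat (fst p) ** snd p)"
  unfolding matrix_matrix_mult_def adj_nth adjoint_mat_def
  by (intro continuous_intros)

lemma cont_adjmul: "continuous_on UNIV (\<lambda>V::complex^'d::finite^'d. adjoint_mat V ** U)"
  unfolding matrix_matrix_mult_def adjoint_mat_def
  by (intro continuous_intros)

lemma cont_bounded: "continuous_on UNIV f \<Longrightarrow> \<exists>B. \<forall>x\<in>UG. norm (f x) \<le> B"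
proof -
  assume "continuous_on UNIV f"
  hence "compact (f ` UG)"
    by (meson UG_compact compact_continuous_image continuous_on_subset subset_UNIV)
  hence "bounded (f ` UG)" by (rule compact_imp_bounded)
  thus ?thesis by (auto simp: bounded_iff)
qed

lemma pou_AE: "prob_on_unitary M \<Longrightarrow> AE x in M. x \<in> UG"
  unfolding prob_on_unitary_def
  by (auto intro!: prob_space.AE_prob_1 simp: measure_def)

lemma pou_meas: "prob_on_unitary M \<Longrightarrow> f \<in> borel_measurable borel \<Longrightarrow> f \<in> borel_measurable M"
  unfolding prob_on_unitary_def using measurable_cong_sets by blast

lemma pou_int:
  fixes h :: "complex^'d::finite^'d \<Rightarrow> complex"
  assumes "prob_on_unitary M" "h \<in> borel_measurable borel" "\<forall>x\<in>UG. norm (h x) \<le> B"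
  shows "integrable M h"
proof -
  interpret prob_space M using assms(1) by (simp add: prob_on_unitary_def)
  show ?thesis
    using pou_AE[OF assms(1)] assms(3) pou_meas[OF assms(1,2)]
    by (intro integrable_const_bound[where B=B]) auto
qed

lemma meas_comp: "continuous_on UNIV f \<Longrightarrow> (\<lambda>V. f (adjoint_mat V ** U)) \<in> borel_measurable borel"
  by (rule borel_measurable_continuous_onI, rule continuous_on_compose2[OF _ cont_adjmul]) auto

lemma int_comp:
  fixes f :: "complex^'d::finite^'d \<Rightarrow> complex"
  assumes "prob_on_unitary M" "continuous_on UNIV f" "U \<in> UG"
  shows "integrable M (\<lambda>V. f (adjoint_mat V ** U))"
proof -
  obtain B where B: "\<forall>x\<in>UG. norm (f x) \<le> B" using cont_bounded[OF assms(2)] by blast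
  show ?thesis
    using assms B by (intro pou_int[where B=B] meas_comp) (auto intro: UG_mult UG_adj)
qed




lemma modF: "module (\<lambda>(c::complex) (f::'a \<Rightarrow> complex) U. c * f U)"
  by unfold_locales (auto simp: fun_eq_iff algebra_simps)

lemma H_induct[consumes 1, case_names zero step]:
  assumes "f \<in> H_space t"
    and zero: "P (\<lambda>_. 0)"
    and step: "\<And>c s A h. s \<le> t \<Longrightarrow> P h \<Longrightarrow> P (\<lambda>U. c * tr_tensor s A U + h U)"
  shows "P f"
proof -
  let ?G = "{G. \<exists>s A. s \<le> t \<and> G = tr_tensor s A} :: (complex^'d^'d \<Rightarrow> complex) set"
  have "f \<in> {(\<Sum>a\<in>T. (\<lambda>c f U. c * f U) (r a) a) | T r. finite T \<and> T \<subseteq> ?G}"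
    using assms(1) unfolding H_space_def module.span_explicit[OF modF] .
  then obtain T r where T: "finite T" "T \<subseteq> ?G"
    and f: "f = (\<Sum>a\<in>T. (\<lambda>c f U. c * f U) (r a) a)"
    by (auto simp only: mem_Collect_eq)
  have "P (\<Sum>a\<in>T. (\<lambda>c f U. c * f U) (r a) a)"
    using T
  proof (induction T rule: finite_induct)
    case empty
    then show ?case using zero by (simp add: zero_fun_def)
  next
    case (insert x F)
    then obtain s A where sA: "s \<le> t" "x = tr_tensor s A" by auto
    have "P (\<lambda>U. r x * tr_tensor s A U + (\<Sum>a\<in>F. (\<lambda>c f U. c * f U) (r a) a) U)"
      using insert sA by (intro step) auto
    moreover have "(\<Sum>a\<in>insert x F. (\<lambda>c f U. c * f U) (r a) a) = (\<lambda>U. r x * tr_tensor s A U + (\<Sum>a\<in>F. (\<lambda>c f U. c * f U) (r a) a) U)"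
      by (subst sum.insert[OF insert.hyps(1,2)]) (simp only: plus_fun_def sA(2))
    ultimately show ?case by simp
  qed
  thus ?thesis using f by simp
qed

lemma haar_pou: "haar_measure \<mu> \<Longrightarrow> prob_on_unitary \<mu>"
  by (simp add: haar_measure_def prob_on_unitary_def)

lemma design_transfer:
  fixes \<mu> \<nu> :: "(complex^'d::finite^'d) measure"
  assumes mu: "prob_on_unitary \<mu>" and nu: "prob_on_unitary \<nu>"
    and des: "exact_design t \<mu> \<nu>" and f: "f \<in> H_space t"
  shows "continuous_on UNIV f \<and>
    (\<forall>U\<in>UG. (\<integral>V. f (adjoint_mat V ** U) \<partial>\<nu>) = (\<integral>V. f (adjoint_mat V ** U) \<partial>\<mu>))"
  using f
proof (induction rule: H_induct)
  case zero
  then show ?case by simp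
next
  case (step c s A h)
  have ch: "continuous_on UNIV h" using step by simp
  have cg: "continuous_on UNIV (tr_tensor s A)" by (rule cont_tr_tensor)
  have gen: "(\<integral>V. tr_tensor s A (adjoint_mat V ** U) \<partial>\<nu>) = (\<integral>V. tr_tensor s A (adjoint_mat V ** U) \<partial>\<mu>)"
    if U: "U \<in> UG" for U
  proof -
    have "(\<lambda>V. tr_tensor s A (adjoint_mat V ** U)) \<in> polys t"
      using polys_le[OF \<open>s \<le> t\<close> polys_subst] .
    then obtain B where B: "\<forall>V\<in>UG. tr_tensor s A (adjoint_mat V ** U) = tr_tensor t B V"
      by (auto simp: polys_def)
    have eq: "(\<integral>V. tr_tensor s A (adjoint_mat V ** U) \<partial>M) = (\<integral>V. tr_tensor t B V \<partial>M)"
      if M: "prob_on_unitary M" for M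
    proof (rule integral_cong_AE)
      show "(\<lambda>V. tr_tensor s A (adjoint_mat V ** U)) \<in> borel_measurable M"
        by (rule pou_meas[OF M meas_comp[OF cg]])
      show "tr_tensor t B \<in> borel_measurable M"
        by (rule pou_meas[OF M borel_measurable_continuous_onI[OF cont_tr_tensor]])
      show "AE V in M. tr_tensor s A (adjoint_mat V ** U) = tr_tensor t B V"
        using pou_AE[OF M] B by auto
    qed
    show ?thesis using eq[OF mu] eq[OF nu] des by (simp add: exact_design_def)
  qed
  show ?case
  proof (intro conjI ballI)
    show "continuous_on UNIV (\<lambda>U. c * tr_tensor s A U + h U)"
      using ch cg by (intro continuous_intros) auto
  next
    fix U :: "complex^'d^'d" assume U: "U \<in> UG"
    have "(\<integral>V. c * tr_tensor s A (adjoint_mat V ** U) + h (adjoint_mat V ** U) \<partial>M) =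
        c * (\<integral>V. tr_tensor s A (adjoint_mat V ** U) \<partial>M) + (\<integral>V. h (adjoint_mat V ** U) \<partial>M)"
      if M: "prob_on_unitary M" for M
      using Bochner_Integration.integral_add[OF integrable_mult_right[OF int_comp[OF M cg U]] int_comp[OF M ch U]]
      by (simp only: integral_mult_right_zero)
    thus "(\<integral>V. c * tr_tensor s A (adjoint_mat V ** U) + h (adjoint_mat V ** U) \<partial>\<nu>) =
          (\<integral>V. c * tr_tensor s A (adjoint_mat V ** U) + h (adjoint_mat V ** U) \<partial>\<mu>)"
      using mu nu gen[OF U] step U by simp
  qed
qed



lemma meas_pair:
  fixes M :: "(complex^'d::finite^'d) measure" and G :: "_ \<Rightarrow> complex"
  assumes "sets M = sets borel" "continuous_on UNIV G"
  shows "G \<in> borel_measurable (M \<Otimes>\<^sub>M M)"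
proof -
  have "sets (M \<Otimes>\<^sub>M M) = sets (borel \<Otimes>\<^sub>M borel)"
    using assms(1) by (rule sets_pair_measure_cong) (rule assms(1))
  also have "\<dots> = sets borel" by (metis borel_prod)
  finally show ?thesis
    using borel_measurable_continuous_onI[OF assms(2)] measurable_cong_sets by blast
qed

lemma haar_left:
  fixes \<mu> :: "(complex^'d::finite^'d) measure" and h :: "_ \<Rightarrow> complex"
  assumes "haar_measure \<mu>" "W \<in> UG" "h \<in> borel_measurable borel"
  shows "integral\<^sup>L \<mu> h = (\<integral>V. h (W ** V) \<partial>\<mu>)"
proof -
  have d: "distr \<mu> borel (\<lambda>U. W ** U) = \<mu>" using assms(1,2) by (simp add: haar_measure_def)
  have "(\<lambda>U. W ** U) \<in> borel_measurable borel"
    unfolding matrix_matrix_mult_def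
    by (intro borel_measurable_continuous_onI continuous_intros)
  hence m: "(\<lambda>U. W ** U) \<in> measurable \<mu> borel"
    using assms(1) measurable_cong_sets unfolding haar_measure_def by blast
  have "integral\<^sup>L \<mu> h = integral\<^sup>L (distr \<mu> borel (\<lambda>U. W ** U)) h" using d by simp
  also have "\<dots> = (\<integral>V. h (W ** V) \<partial>\<mu>)"
    by (rule integral_distr[OF m assms(3)])
  finally show ?thesis .
qed

lemma haar_inv:
  fixes \<mu> :: "(complex^'d::finite^'d) measure" and f :: "_ \<Rightarrow> complex"
  assumes haar: "haar_measure \<mu>" and cf: "continuous_on UNIV f" and U: "U \<in> UG"
  shows "(\<integral>V. f (adjoint_mat V ** U) \<partial>\<mu>) = integral\<^sup>L \<mu> f"
proof -
  have pou: "prob_on_unitary \<mu>" using haar by (simp add: haar_measure_def prob_on_unitary_def)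
  interpret P: pair_prob_space \<mu> \<mu>
    using pou unfolding prob_on_unitary_def pair_prob_space_def pair_sigma_finite_def
    by (simp add: prob_space_imp_sigma_finite)
  have sets: "sets \<mu> = sets borel" using haar by (simp add: haar_measure_def)
  have AE: "AE x in \<mu>. x \<in> UG" by (rule pou_AE[OF pou])
  define c0 where "c0 = (\<integral>V. f (adjoint_mat V) \<partial>\<mu>)"
  have cU: "(\<integral>V. f (adjoint_mat V ** W) \<partial>\<mu>) = c0" if W: "W \<in> UG" for W
  proof -
    have "(\<integral>V. f (adjoint_mat V ** W) \<partial>\<mu>) = (\<integral>V. f (adjoint_mat (W ** V) ** W) \<partial>\<mu>)"
      by (rule haar_left[OF haar W meas_comp[OF cf]])
    also have "\<dots> = c0"
      using W by (simp add: c0_def adj_mult matrix_mul_assoc[symmetric] UG_iff)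
    finally show ?thesis .
  qed
  have cinv: "(\<integral>U. f (adjoint_mat V ** U) \<partial>\<mu>) = integral\<^sup>L \<mu> f" if V: "V \<in> UG" for V
    using haar_left[OF haar UG_adj[OF V] borel_measurable_continuous_onI[OF cf]] by simp
  have cpair: "continuous_on UNIV (\<lambda>p. f (adjoint_mat (fst p) ** snd p))"
    by (rule continuous_on_compose2[OF cf cont_adjmul_pair]) auto
  have cpair2: "continuous_on UNIV (\<lambda>p. f (adjoint_mat (snd p) ** fst p))"
  proof -
    have "continuous_on UNIV (\<lambda>p. (snd p, fst p) :: (complex^'d^'d) \<times> (complex^'d^'d))"
      by (intro continuous_intros)
    from continuous_on_compose2[OF cpair this]
    show ?thesis by simp
  qed
  obtain B where B: "\<forall>x\<in>UG. norm (f x) \<le> B" using cont_bounded[OF cf] by blast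
  have int: "integrable (\<mu> \<Otimes>\<^sub>M \<mu>) (\<lambda>(V, U). f (adjoint_mat V ** U))"
  proof (rule P.integrable_const_bound[where B=B])
    have "AE p in \<mu> \<Otimes>\<^sub>M \<mu>. fst p \<in> UG \<and> snd p \<in> UG"
    proof (rule P.AE_pair_measure)
      have "{x \<in> space (\<mu> \<Otimes>\<^sub>M \<mu>). fst x \<in> UG \<and> snd x \<in> UG} = space (\<mu> \<Otimes>\<^sub>M \<mu>) \<inter> (UG \<times> UG)"
        by auto
      also have "\<dots> \<in> sets (\<mu> \<Otimes>\<^sub>M \<mu>)"
        using sets by (intro sets.Int sets.top pair_measureI) auto
      finally show "{x \<in> space (\<mu> \<Otimes>\<^sub>M \<mu>). fst x \<in> UG \<and> snd x \<in> UG} \<in> sets (\<mu> \<Otimes>\<^sub>M \<mu>)" .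
      show "AE x in \<mu>. AE y in \<mu>. fst (x, y) \<in> UG \<and> snd (x, y) \<in> UG"
        using AE by eventually_elim (use AE in simp)
    qed
    thus "AE p in \<mu> \<Otimes>\<^sub>M \<mu>. norm ((\<lambda>(V, U). f (adjoint_mat V ** U)) p) \<le> B"
      by eventually_elim (auto intro!: B[rule_format] UG_mult UG_adj)
    show "(\<lambda>(V, U). f (adjoint_mat V ** U)) \<in> borel_measurable (\<mu> \<Otimes>\<^sub>M \<mu>)"
      using meas_pair[OF sets cpair] by (simp add: case_prod_beta')
  qed
  have fub: "(\<integral>U. (\<integral>V. f (adjoint_mat V ** U) \<partial>\<mu>) \<partial>\<mu>) = (\<integral>V. (\<integral>U. f (adjoint_mat V ** U) \<partial>\<mu>) \<partial>\<mu>)"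
    by (rule P.Fubini_integral) (use int in simp)
  have m1: "(\<lambda>U. \<integral>V. f (adjoint_mat V ** U) \<partial>\<mu>) \<in> borel_measurable \<mu>"
  proof (rule P.M1.borel_measurable_lebesgue_integral[of "\<lambda>U V. f (adjoint_mat V ** U)" \<mu>])
    show "(\<lambda>(U, V). f (adjoint_mat V ** U)) \<in> borel_measurable (\<mu> \<Otimes>\<^sub>M \<mu>)"
      using meas_pair[OF sets cpair2] by (simp add: case_prod_beta')
  qed
  have m2: "(\<lambda>V. \<integral>U. f (adjoint_mat V ** U) \<partial>\<mu>) \<in> borel_measurable \<mu>"
  proof (rule P.M1.borel_measurable_lebesgue_integral[of "\<lambda>V U. f (adjoint_mat V ** U)" \<mu>])
    show "(\<lambda>(V, U). f (adjoint_mat V ** U)) \<in> borel_measurable (\<mu> \<Otimes>\<^sub>M \<mu>)"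
      using meas_pair[OF sets cpair] by (simp add: case_prod_beta')
  qed
  have "(\<integral>U. (\<integral>V. f (adjoint_mat V ** U) \<partial>\<mu>) \<partial>\<mu>) = (\<integral>U. c0 \<partial>\<mu>)"
    by (rule integral_cong_AE[OF m1]) (use AE cU in auto)
  also have "\<dots> = c0" by (simp add: P.M1.prob_space)
  finally have L: "(\<integral>U. (\<integral>V. f (adjoint_mat V ** U) \<partial>\<mu>) \<partial>\<mu>) = c0" .
  have "(\<integral>V. (\<integral>U. f (adjoint_mat V ** U) \<partial>\<mu>) \<partial>\<mu>) = (\<integral>V. integral\<^sup>L \<mu> f \<partial>\<mu>)"
    by (rule integral_cong_AE[OF m2]) (use AE cinv in auto)
  also have "\<dots> = integral\<^sup>L \<mu> f" by (simp add: P.M1.prob_space)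
  finally have R: "(\<integral>V. (\<integral>U. f (adjoint_mat V ** U) \<partial>\<mu>) \<partial>\<mu>) = integral\<^sup>L \<mu> f" .
  show ?thesis using cU[OF U] L R fub by simp
qed



lemma cont_det: "continuous_on UNIV (det :: complex^'d::finite^'d \<Rightarrow> complex)"
  unfolding det_def by (intro continuous_intros)

definition Cinv :: "complex^'d::finite^'d \<Rightarrow> complex^'d^'d" where
  "Cinv A = (\<chi> i k. det (\<chi> a j. if j = i then (if a = k then 1 else 0) else A $ a $ j) / det A)"

lemma matrix_inv_Cinv:
  fixes A :: "complex^'d::finite^'d"
  assumes "det A \<noteq> 0" shows "matrix_inv A = Cinv A"
proof -
  have "invertible A" using assms by (simp add: invertible_det_nz)
  hence ex: "\<exists>A'. A ** A' = mat 1 \<and> A' ** A = mat 1" by (simp add: invertible_def)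
  have AM: "A ** matrix_inv A = mat 1"
    unfolding matrix_inv_def using someI_ex[OF ex] by blast
  show ?thesis
  proof (subst vec_eq_iff, intro allI, subst vec_eq_iff, intro allI)
    fix i k
    let ?e = "(\<chi> a. if a = k then 1 else 0) :: complex^'d"
    have "A *v (matrix_inv A *v ?e) = ?e"
      by (simp add: matrix_vector_mul_assoc AM)
    hence "matrix_inv A *v ?e = (\<chi> j. det(\<chi> a b. if b = j then ?e $ a else A $ a $ b) / det A)"
      using cramer[OF assms] by blast
    hence "(matrix_inv A *v ?e) $ i = det(\<chi> a b. if b = i then ?e $ a else A $ a $ b) / det A"
      by simp
    moreover have "(matrix_inv A *v ?e) $ i = matrix_inv A $ i $ k"
      by (simp add: matrix_vector_mult_def if_distrib[of "\<lambda>x. _ * x"] cong: if_cong)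
    moreover have "det(\<chi> a b. if b = i then ?e $ a else A $ a $ b) =
       det (\<chi> a j. if j = i then (if a = k then 1 else 0) else A $ a $ j)"
      by (rule arg_cong[where f=det]) (simp add: vec_eq_iff)
    ultimately show "matrix_inv A $ i $ k = Cinv A $ i $ k"
      by (simp add: Cinv_def)
  qed
qed

lemma matrix_inv_sing:
  fixes A :: "complex^'d::finite^'d"
  assumes "det A = 0" shows "matrix_inv A = matrix_inv (0 :: complex^'d^'d)"
proof -
  have nA: "\<not> (A ** A' = mat 1 \<and> A' ** A = mat 1)" for A'
    using assms invertible_det_nz invertible_def by metis
  have n0: "\<not> ((0 :: complex^'d^'d) ** A' = mat 1 \<and> A' ** 0 = mat 1)" for A' :: "complex^'d^'d"
  proof
    assume "(0 :: complex^'d^'d) ** A' = mat 1 \<and> A' ** 0 = mat 1"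
    hence "(0 :: complex^'d^'d) = mat 1" by (simp add: matrix_matrix_mult_def vec_eq_iff)
    moreover have "(mat 1 :: complex^'d^'d) $ undefined $ undefined = 1" by (simp add: mat_def)
    ultimately show False by (metis zero_index zero_neq_one)
  qed
  have e1: "(\<lambda>A'. A ** A' = mat 1 \<and> A' ** A = mat 1) = (\<lambda>_. False)" using nA by auto
  have e2: "(\<lambda>A'. (0 :: complex^'d^'d) ** A' = mat 1 \<and> A' ** 0 = mat 1) = (\<lambda>_. False)" using n0 by auto
  show ?thesis unfolding matrix_inv_def e1 e2 ..
qed

lemma cont_if_const: "continuous_on S f \<Longrightarrow> continuous_on S g \<Longrightarrow> continuous_on S (\<lambda>x. if P then f x else g x)"
  by (cases P) auto

lemma meas_matrix_inv:
  fixes \<Phi> :: "complex^'d::finite^'d \<Rightarrow> complex" and U :: "complex^'d^'d"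
  assumes cf: "continuous_on UNIV \<Phi>"
  shows "(\<lambda>V. \<Phi> (matrix_inv V ** U)) \<in> borel_measurable borel"
proof -
  let ?S = "{V :: complex^'d^'d. det V \<noteq> 0}"
  have eq: "(\<lambda>V. \<Phi> (matrix_inv V ** U)) =
    (\<lambda>V. if V \<in> ?S then \<Phi> (Cinv V ** U) else \<Phi> (matrix_inv (0 :: complex^'d^'d) ** U))"
  proof (rule ext)
    fix V :: "complex^'d^'d"
    show "\<Phi> (matrix_inv V ** U) = (if V \<in> ?S then \<Phi> (Cinv V ** U) else \<Phi> (matrix_inv (0 :: complex^'d^'d) ** U))"
    proof (cases "det V = 0")
      case True then show ?thesis using matrix_inv_sing[OF True] by simp
    next
      case False then show ?thesis using matrix_inv_Cinv[OF False] by simp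
    qed
  qed
  have op: "open ?S" by (rule open_Collect_neq[OF cont_det continuous_on_const])
  have cS: "continuous_on ?S (\<lambda>V. Cinv V ** U)"
    unfolding Cinv_def matrix_matrix_mult_def det_def[symmetric]
    by (intro continuous_intros cont_if_const continuous_on_compose2[OF cont_det]) auto
  have "continuous_on ?S (\<lambda>V. \<Phi> (Cinv V ** U))"
    by (rule continuous_on_compose2[OF cf cS]) auto
  thus ?thesis unfolding eq
    by (intro borel_measurable_continuous_on_if borel_open[OF op] continuous_on_const)
qed


theorem lemma1:
  fixes \<mu> \<nu> :: "(complex^'d::finite^'d) measure"
    and \<Phi> :: "complex^'d^'d \<Rightarrow> complex"
    and t :: nat and V :: "complex^'d^'d" and \<epsilon> :: real
  assumes "haar_measure \<mu>"
    and "prob_on_unitary \<nu>"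
    and "exact_design t \<mu> \<nu>"
    and "\<Phi> \<in> H_space t"
    and "integral\<^sup>L \<mu> \<Phi> = 1"
    and "V \<in> unitary_group"
    and "0 \<le> \<epsilon>" and "\<epsilon> \<le> 2"
  shows "(LINT U:chan_ball V \<epsilon>|\<mu>. T_op \<nu> \<Phi> U) = complex_of_real (measure \<mu> (chan_ball V \<epsilon>))"
proof -
  have mu: "prob_on_unitary \<mu>" using assms(1) by (rule haar_pou)
  have nu: "prob_on_unitary \<nu>" by (rule assms(2))
  have DT: "continuous_on UNIV \<Phi> \<and>
    (\<forall>U\<in>UG. (\<integral>V. \<Phi> (adjoint_mat V ** U) \<partial>\<nu>) = (\<integral>V. \<Phi> (adjoint_mat V ** U) \<partial>\<mu>))"
    by (rule design_transfer[OF mu nu assms(3,4)])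
  hence cf: "continuous_on UNIV \<Phi>" by simp
  have T1: "T_op \<nu> \<Phi> U = 1" if U: "U \<in> UG" for U
  proof -
    have "T_op \<nu> \<Phi> U = (\<integral>W. \<Phi> (matrix_inv W ** U) \<partial>\<nu>)" by (simp add: T_op_def)
    also have "\<dots> = (\<integral>W. \<Phi> (adjoint_mat W ** U) \<partial>\<nu>)"
    proof (rule integral_cong_AE)
      show "(\<lambda>W. \<Phi> (matrix_inv W ** U)) \<in> borel_measurable \<nu>"
        by (rule pou_meas[OF nu meas_matrix_inv[OF cf]])
      show "(\<lambda>W. \<Phi> (adjoint_mat W ** U)) \<in> borel_measurable \<nu>"
        by (rule pou_meas[OF nu meas_comp[OF cf]])
      show "AE W in \<nu>. \<Phi> (matrix_inv W ** U) = \<Phi> (adjoint_mat W ** U)"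
        using pou_AE[OF nu] by eventually_elim (simp add: matrix_inv_UG)
    qed
    also have "\<dots> = (\<integral>W. \<Phi> (adjoint_mat W ** U) \<partial>\<mu>)" using DT U by simp
    also have "\<dots> = integral\<^sup>L \<mu> \<Phi>" by (rule haar_inv[OF assms(1) cf U])
    finally show ?thesis using assms(5) by simp
  qed
  let ?S = "chan_ball V \<epsilon>"
  have SU: "?S \<subseteq> UG" by (auto simp: chan_ball_def)
  have sp: "space \<mu> = UNIV"
    using assms(1) unfolding haar_measure_def by (metis sets_eq_imp_space_eq space_borel)
  have "(LINT U:?S|\<mu>. T_op \<nu> \<Phi> U) = (\<integral>U. complex_of_real (indicator ?S U) \<partial>\<mu>)"
    unfolding set_lebesgue_integral_def
  proof (rule Bochner_Integration.integral_cong[OF refl])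
    fix U show "indicator ?S U *\<^sub>R T_op \<nu> \<Phi> U = complex_of_real (indicator ?S U)"
      using SU T1 by (cases "U \<in> ?S") auto
  qed
  also have "\<dots> = complex_of_real (measure \<mu> ?S)"
    using sp by simp
  finally show ?thesis .
qed

end
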